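(* Let $z_0\in T$ and $k\in\{0,1,2,\dots\}\cup\{\infty\}$. Then $U_5(T,z_0,k)$ is a dense $G_\delta$ subset of $C^k(T)$.
   Context: $T=\{|z|=1\}$, $D(z_0,r)$ the open disk of center $z_0$ and radius $r$. For $k\in\{0,1,2,\dots\}\cup\{\infty\}$, $C^k(T)$ is the space of $u:T\to\mathbb{C}$ such that $\theta\mapsto u(e^{i\theta})$ is $k$ times continuously differentiable on $\mathbb{R}$, with the topology given by the seminorms $\sup_{\theta\in\mathbb{R}}|\frac{d^l}{d\theta^l}u(e^{i\theta})|$ for all integers $0\le l\le k$. $U_5(T,z_0,k)$ is the set of $u\in C^k(T)$ for which there exist no $r>0$ and no holomorphic $F:D(z_0,r)\to\mathbb{C}$ with $F=u$ on $D(z_0,r)\cap T$. *)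

theory Defs
  imports "HOL-Analysis.Analysis" "HOL-Library.Extended_Nat"
begin

abbreviation circleT :: "complex set" where
  "circleT \<equiv> sphere 0 1"

fun vder :: "nat \<Rightarrow> (real \<Rightarrow> complex) \<Rightarrow> real \<Rightarrow> complex" where
  "vder 0 g = g"
| "vder (Suc l) g = (\<lambda>t. vector_derivative (vder l g) (at t))"

definition param :: "(complex \<Rightarrow> complex) \<Rightarrow> real \<Rightarrow> complex" where
  "param u = (\<lambda>\<theta>. u (cis \<theta>))"

text \<open>C^k(T), k in {0,1,2,...} or infinity. A function T to C is represented by
  u :: complex => complex which vanishes off T (canonical representative).\<close>
definition Ck :: "enat \<Rightarrow> (complex \<Rightarrow> complex) set" where
  "Ck k = {u. (\<forall>z. z \<notin> circleT \<longrightarrow> u z = 0) \<and>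
      (\<forall>l::nat. enat l \<le> k \<longrightarrow> continuous_on UNIV (vder l (param u))) \<and>
      (\<forall>l::nat. enat l < k \<longrightarrow> (\<forall>t. vder l (param u) differentiable (at t)))}"

definition seminormCk :: "nat \<Rightarrow> (complex \<Rightarrow> complex) \<Rightarrow> real" where
  "seminormCk l u = (SUP \<theta>. norm (vder l (param u) \<theta>))"

definition Ck_topology :: "enat \<Rightarrow> (complex \<Rightarrow> complex) topology" where
  "Ck_topology k = topology (\<lambda>U. U \<subseteq> Ck k \<and>
      (\<forall>u\<in>U. \<exists>n::nat. \<exists>\<epsilon>>0. enat n \<le> k \<and>
         {v \<in> Ck k. \<forall>j\<le>n. seminormCk j (\<lambda>z. v z - u z) < \<epsilon>} \<subseteq> U))"

definition U5 :: "complex \<Rightarrow> enat \<Rightarrow> (complex \<Rightarrow> complex) set" where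
  "U5 z0 k = {u \<in> Ck k. \<not> (\<exists>r>0. \<exists>F. F holomorphic_on ball z0 r \<and>
      (\<forall>z \<in> ball z0 r \<inter> circleT. F z = u z))}"

end

theory Submission imports Defs "HOL-Complex_Analysis.Complex_Analysis" "HOL-Real_Asymp.Real_Asymp"
begin

definition Phi :: "complex \<Rightarrow> complex" where "Phi w = exp (1 / (1 - w)^2)"

fun pp :: "nat \<Rightarrow> complex \<Rightarrow> complex" where
  "pp 0 = (\<lambda>w. 1)"
| "pp (Suc n) = (\<lambda>w. \<i> * w * (deriv (pp n) w + pp n w * (2 / (1 - w)^3)))"

definition growth :: "(complex \<Rightarrow> complex) \<Rightarrow> bool" where
  "growth f \<longleftrightarrow> (\<exists>C r m. 0 < r \<and> r \<le> 1 \<and> 0 \<le> C \<and>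
     (\<forall>w. 0 < norm (w - 1) \<and> norm (w - 1) \<le> r \<longrightarrow> norm (f w) \<le> C / norm (w - 1) ^ m))"

lemma growth_mono:
  fixes d C :: real
  assumes "0 < d" "d \<le> 1" "m \<le> m'" "0 \<le> C"
  shows "C / d ^ m \<le> C / d ^ m'"
proof -
  have "d ^ m' \<le> d ^ m" using power_decreasing[of m m' d] assms by simp
  then show ?thesis using assms by (intro divide_left_mono) auto
qed

lemma growth_deriv:
  assumes hol: "f holomorphic_on -{1}" and g: "growth f"
  shows "growth (deriv f)"
proof -
  obtain C r m where r: "0 < r" "r \<le> 1" "0 \<le> C"
    and b: "\<And>w. 0 < norm (w - 1) \<Longrightarrow> norm (w - 1) \<le> r \<Longrightarrow> norm (f w) \<le> C / norm (w - 1) ^ m"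
    using g unfolding growth_def by blast
  have "norm (deriv f w) \<le> (C * 2^(Suc m)) / norm (w - 1) ^ Suc m"
    if w: "0 < norm (w - 1)" "norm (w - 1) \<le> r/2" for w
  proof -
    define d where "d = norm (w - 1)"
    have d: "0 < d" "d \<le> r/2" using w d_def by auto
    have sub: "cball w (d/2) \<subseteq> -{1}"
    proof
      fix x assume "x \<in> cball w (d/2)"
      then have "norm (w - x) \<le> d/2" by (simp add: dist_norm)
      moreover have "d \<le> norm (w - x) + norm (x - 1)"
        unfolding d_def using norm_triangle_ineq[of "w - x" "x - 1"] by simp
      ultimately show "x \<in> -{1}" using d by auto
    qed
    have holb: "f holomorphic_on ball w (d/2)"
      using hol sub ball_subset_cball holomorphic_on_subset by blast
    have contb: "continuous_on (cball w (d/2)) f"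
      using holomorphic_on_imp_continuous_on[OF hol] sub continuous_on_subset by blast
    have bnd: "norm (f x) \<le> C * 2^m / d^m" if "norm (w - x) = d/2" for x
    proof -
      have "d \<le> norm (w - x) + norm (x - 1)"
        unfolding d_def using norm_triangle_ineq[of "w - x" "x - 1"] by simp
      then have x1: "d/2 \<le> norm (x - 1)" using that by simp
      have x2: "norm (x - 1) \<le> r"
      proof -
        have "norm (x - 1) \<le> norm (x - w) + norm (w - 1)"
          using norm_triangle_ineq[of "x - w" "w - 1"] by simp
        also have "\<dots> = d/2 + d" using that d_def by (simp add: norm_minus_commute)
        finally show ?thesis using d by simp
      qed
      have x0: "0 < norm (x - 1)" using x1 d by linarith
      have "norm (f x) \<le> C / norm (x - 1) ^ m" using b[OF x0 x2] .
      also have "\<dots> \<le> C / (d/2)^m"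
        using x0 x1 d r by (intro divide_left_mono power_mono mult_pos_pos zero_less_power) auto
      also have "\<dots> = C * 2^m / d^m" by (simp add: power_divide)
      finally show ?thesis .
    qed
    have "norm ((deriv ^^ 1) f w) \<le> fact 1 * (C * 2^m / d^m) / (d/2)^1"
      by (rule Cauchy_inequality[OF holb contb]) (use d bnd in auto)
    also have "\<dots> = (C * 2^(Suc m)) / d ^ Suc m" using d by (simp add: field_simps)
    finally show ?thesis by (simp add: d_def)
  qed
  then show ?thesis unfolding growth_def using r
    by (intro exI[of _ "C * 2^(Suc m)"] exI[of _ "r/2"] exI[of _ "Suc m"]) auto
qed

lemma pp_props: "pp n holomorphic_on -{1} \<and> growth (pp n)"
proof (induction n)
  case 0
  have "growth (pp 0)" unfolding growth_def
    by (rule exI[of _ "1::real"], rule exI[of _ "1::real"], rule exI[of _ 0]) simp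
  moreover have "pp 0 holomorphic_on -{1}" by (simp add: holomorphic_on_const)
  ultimately show ?case by blast
next
  case (Suc n)
  have hol: "pp n holomorphic_on -{1}" and g: "growth (pp n)" using Suc by auto
  have hold: "deriv (pp n) holomorphic_on -{1}"
    by (rule holomorphic_deriv[OF hol]) (simp add: open_Compl)
  have gd: "growth (deriv (pp n))" by (rule growth_deriv[OF hol g])
  have h1: "pp (Suc n) holomorphic_on -{1}"
    unfolding pp.simps using hol hold by (auto intro!: holomorphic_intros)
  obtain C r m where r: "0 < r" "r \<le> 1" "0 \<le> C"
    and b: "\<And>w. 0 < norm (w - 1) \<Longrightarrow> norm (w - 1) \<le> r \<Longrightarrow> norm (pp n w) \<le> C / norm (w - 1) ^ m"
    using g unfolding growth_def by blast
  obtain C1 r1 m1 where r1: "0 < r1" "r1 \<le> 1" "0 \<le> C1"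
    and b1: "\<And>w. 0 < norm (w - 1) \<Longrightarrow> norm (w - 1) \<le> r1 \<Longrightarrow> norm (deriv (pp n) w) \<le> C1 / norm (w - 1) ^ m1"
    using gd unfolding growth_def by blast
  define M where "M = max m1 (m + 3)"
  have "norm (pp (Suc n) w) \<le> (2 * (C1 + 2 * C)) / norm (w - 1) ^ M"
    if w: "0 < norm (w - 1)" "norm (w - 1) \<le> min r1 r" for w
  proof -
    define d where "d = norm (w - 1)"
    have d: "0 < d" "d \<le> 1" "d \<le> r" "d \<le> r1" using w r r1 d_def by auto
    have nw: "norm w \<le> 2"
      using norm_triangle_ineq[of "w - 1" 1] d unfolding d_def by simp
    have n1: "norm (deriv (pp n) w) \<le> C1 / d ^ M"
      using b1[OF w(1)] d growth_mono[of d m1 M C1] r1 unfolding d_def M_def by auto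
    have n3: "norm (2 / (1 - w)^3) = 2 / d^3"
      unfolding d_def by (simp add: norm_divide norm_power norm_minus_commute)
    have "norm (pp n w * (2 / (1 - w)^3)) \<le> C / d ^ m * (2 / d^3)"
      unfolding norm_mult n3 using b[OF w(1)] d unfolding d_def
      by (intro mult_right_mono) auto
    also have "\<dots> = 2 * C / d ^ (m + 3)" using d by (simp add: field_simps power_add)
    also have "\<dots> \<le> 2 * C / d ^ M"
      using growth_mono[of d "m+3" M "2*C"] d r unfolding M_def by auto
    finally have n2: "norm (pp n w * (2 / (1 - w)^3)) \<le> 2 * C / d ^ M" .
    have "norm (pp (Suc n) w) = norm w * norm (deriv (pp n) w + pp n w * (2 / (1 - w)^3))"
      by (simp add: norm_mult)
    also have "\<dots> \<le> 2 * (C1 / d ^ M + 2 * C / d ^ M)"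
      using nw n1 n2 norm_triangle_ineq[of "deriv (pp n) w" "pp n w * (2 / (1 - w)^3)"]
      by (intro mult_mono) auto
    also have "\<dots> = (2 * (C1 + 2 * C)) / d ^ M" by (simp add: add_divide_distrib)
    finally show ?thesis unfolding d_def .
  qed
  then have "growth (pp (Suc n))" unfolding growth_def using r r1
    by (intro exI[of _ "2 * (C1 + 2 * C)"] exI[of _ "min r1 r"] exI[of _ M]) auto
  with h1 show ?case by blast
qed

lemma Phi_deriv:
  assumes "w \<noteq> 1"
  shows "(Phi has_field_derivative Phi w * (2 / (1 - w)^3)) (at w)"
proof -
  have gen: "\<And>a e::complex. a \<noteq> 0 \<Longrightarrow> e * (2 * a) / a^4 = e * 2 / a^3"
    by (simp add: field_simps eval_nat_numeral)
  have "1 - w \<noteq> 0" using assms by simp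
  then have "((\<lambda>w. exp (1 / (1 - w)^2)) has_field_derivative exp (1 / (1 - w)^2) * (2 / (1 - w)^3)) (at w)"
    apply (auto intro!: derivative_eq_intros)
    using gen[of "1 - w" "exp (1 / (1 - w)\<^sup>2)"] by (simp add: algebra_simps)
  then show ?thesis unfolding Phi_def[abs_def] .
qed

lemma Re_aux:
  fixes x y :: real
  assumes "x^2 + y^2 = 1" "Complex x y \<noteq> 1"
  shows "Re (1 / (1 - Complex x y)^2) = 1/2 - 1 / ((1 - x)^2 + y^2)"
proof -
  have x: "x \<noteq> 1"
  proof
    assume "x = 1" then have "y = 0" using assms(1) by simp
    with \<open>x = 1\<close> assms(2) show False by (simp add: complex_eq_iff)
  qed
  have y2: "y^2 = 1 - x^2" using assms(1) by simp
  have n: "(1 - x)^2 + y^2 = 2 - 2*x" using y2 by (simp add: power2_eq_square algebra_simps)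
  have sq: "(1 - Complex x y)^2 = Complex ((1-x)^2 - y^2) (-2*(1-x)*y)"
    by (simp add: complex_eq_iff power2_eq_square algebra_simps)
  have p: "(1-x)^2 - y^2 = -2*x*(1-x)" using y2 by (simp add: power2_eq_square algebra_simps)
  have pq: "((1-x)^2 - y^2)^2 + (-2*(1-x)*y)^2 = ((1 - x)^2 + y^2)^2"
    by (simp add: power2_eq_square algebra_simps)
  have "Re (1 / (1 - Complex x y)^2) = ((1-x)^2 - y^2) / (((1-x)^2 - y^2)^2 + (-2*(1-x)*y)^2)"
    unfolding sq by (simp add: Re_divide power2_eq_square)
  also have "\<dots> = -2*x*(1-x) / (2 - 2*x)^2" unfolding pq unfolding n unfolding p ..
  also have "\<dots> = 1/2 - 1 / (2 - 2*x)"
  proof -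
    have g: "\<And>a::real. a \<noteq> 0 \<Longrightarrow> -2*(1-a)*a/(2*a)^2 = 1/2 - 1/(2*a)"
      by (simp add: field_simps power2_eq_square)
    have a: "1 - x \<noteq> 0" using x by simp
    show ?thesis using g[OF a] by (simp add: algebra_simps)
  qed
  finally show ?thesis unfolding n .
qed

lemma Phi_norm_T:
  assumes "norm w = 1" "w \<noteq> 1"
  shows "norm (Phi w) = exp (1/2 - 1 / norm (w - 1)^2)"
proof -
  obtain x y where w: "w = Complex x y" by (cases w) auto
  have xy: "x^2 + y^2 = 1" using assms(1) unfolding w by (simp add: cmod_def)
  have n: "norm (w - 1)^2 = (1 - x)^2 + y^2" unfolding w
    by (simp only: cmod_power2) (simp add: power2_eq_square algebra_simps)
  show ?thesis unfolding Phi_def norm_exp_eq_Re n using Re_aux[OF xy] assms(2) w by simp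
qed

lemma cis_sub_le: "norm (cis a - cis b) \<le> \<bar>a - b\<bar>"
proof -
  define t where "t = (a - b) / 2"
  have "norm (cis a - cis b)^2 = (cos a - cos b)^2 + (sin a - sin b)^2"
    by (simp add: cmod_def)
  also have "\<dots> = 2 - 2 * cos (a - b)"
    by (simp add: power2_eq_square cos_diff algebra_simps)
  also have "\<dots> = 4 * sin t ^ 2"
  proof -
    have "a - b = 2 * t" unfolding t_def by simp
    then show ?thesis by (simp add: cos_double_sin)
  qed
  also have "\<dots> \<le> 4 * t^2"
    using abs_sin_x_le_abs_x[of t] by (simp add: power2_le_iff_abs_le abs_le_square_iff)
  also have "\<dots> = \<bar>a - b\<bar>^2" unfolding t_def by (simp add: power2_eq_square field_simps)
  finally show ?thesis using abs_ge_zero power2_le_imp_le by blast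
qed

lemma psi_lim: "((\<lambda>d::real. exp(-1/d^2) / d^(m+1)) \<longlongrightarrow> 0) (at_right 0)"
  by real_asymp

definition HH :: "complex \<Rightarrow> nat \<Rightarrow> real \<Rightarrow> complex" where
  "HH z0 n t = (if cis t = z0 then 0 else pp n (cis t / z0) * Phi (cis t / z0))"

lemma HH_deriv_off:
  assumes z0: "norm z0 = 1" and th: "cis \<theta> \<noteq> z0"
  shows "(HH z0 n has_vector_derivative HH z0 (Suc n) \<theta>) (at \<theta>)"
proof -
  define w where "w = cis \<theta> / z0"
  have z00: "z0 \<noteq> 0" using z0 by auto
  have w1: "w \<noteq> 1" using th z00 unfolding w_def by auto
  have hol: "pp n holomorphic_on -{1}" using pp_props by blast
  have dp: "(pp n has_field_derivative deriv (pp n) w) (at w)"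
    using hol w1 by (auto intro!: holomorphic_derivI simp: open_Compl)
  have dE: "((\<lambda>w. pp n w * Phi w) has_field_derivative
      (pp n w * (Phi w * (2 / (1 - w)^3)) + deriv (pp n) w * Phi w)) (at w)"
    by (rule DERIV_mult'[OF dp Phi_deriv[OF w1], THEN DERIV_cong]) (simp add: algebra_simps)
  have dc: "((\<lambda>t. cis t / z0) has_vector_derivative (\<i> * cis \<theta> / z0)) (at \<theta>)"
  proof -
    have "(cis has_vector_derivative (\<i> * cis \<theta>)) (at \<theta>)"
      using has_derivative_cis[OF has_derivative_ident[of "at \<theta>"]]
      by (simp add: has_vector_derivative_def)
    then show ?thesis by (auto intro!: derivative_eq_intros)
  qed
  have ch: "(((\<lambda>w. pp n w * Phi w) \<circ> (\<lambda>t. cis t / z0)) has_vector_derivative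
     (\<i> * cis \<theta> / z0) * (pp n w * (Phi w * (2 / (1 - w)^3)) + deriv (pp n) w * Phi w)) (at \<theta>)"
    by (rule field_vector_diff_chain_at[OF dc]) (use dE w_def in simp)
  have eq: "(\<i> * cis \<theta> / z0) * (pp n w * (Phi w * (2 / (1 - w)^3)) + deriv (pp n) w * Phi w)
      = HH z0 (Suc n) \<theta>"
  proof -
    have iw: "\<i> * cis \<theta> / z0 = \<i> * w" by (simp add: w_def)
    show ?thesis unfolding iw HH_def using th by (simp add: w_def[symmetric] algebra_simps)
  qed
  have op: "open {t. cis t \<noteq> z0}"
    by (rule open_Collect_neq) (auto intro!: continuous_intros)
  show ?thesis
    by (rule has_vector_derivative_transform_within_open[OF ch[unfolded eq] op])
       (use th in \<open>auto simp: HH_def\<close>)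
qed

lemma HH_deriv_on:
  assumes z0: "norm z0 = 1" and th: "cis \<theta> = z0"
  shows "(HH z0 n has_vector_derivative 0) (at \<theta>)"
proof -
  obtain C r m where r: "0 < r" "r \<le> 1" "0 \<le> C"
    and b: "\<And>w. 0 < norm (w - 1) \<Longrightarrow> norm (w - 1) \<le> r \<Longrightarrow> norm (pp n w) \<le> C / norm (w - 1) ^ m"
    using pp_props[of n] unfolding growth_def by blast
  have z00: "z0 \<noteq> 0" using z0 by auto
  define K where "K = C * exp (1/2) + 1"
  have K: "0 < K" unfolding K_def using r by (simp add: add_nonneg_pos)
  have lim: "((\<lambda>y. norm (HH z0 n y) / norm (y - \<theta>)) \<longlongrightarrow> 0) (at \<theta>)"
  proof (rule tendstoI)
    fix e :: real assume e: "0 < e"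
    have "eventually (\<lambda>d::real. dist (exp(-1/d^2) / d^(m+1)) 0 < e / K) (at_right 0)"
      using tendstoD[OF psi_lim[of m] divide_pos_pos[OF e K]] .
    then obtain b where b0: "b > 0" and bb: "\<And>d. d > 0 \<Longrightarrow> d < b \<Longrightarrow> \<bar>exp(-1/d^2) / d^(m+1)\<bar> < e / K"
      unfolding eventually_at_right_field dist_real_def by auto
    show "eventually (\<lambda>y. dist (norm (HH z0 n y) / norm (y - \<theta>)) 0 < e) (at \<theta>)"
      unfolding eventually_at
    proof (intro exI[of _ "min b r"] conjI ballI impI)
      show "0 < min b r" using b0 r by simp
      fix y :: real assume y: "y \<in> UNIV" "y \<noteq> \<theta> \<and> dist y \<theta> < min b r"
      show "dist (norm (HH z0 n y) / norm (y - \<theta>)) 0 < e"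
      proof (cases "cis y = z0")
        case True
        then show ?thesis using e by (simp add: HH_def)
      next
        case False
        define w where "w = cis y / z0"
        define d where "d = norm (w - 1)"
        have wd: "w - 1 = (cis y - z0) / z0" unfolding w_def using z00 by (simp add: field_simps)
        have dd: "d = norm (cis y - z0)" unfolding d_def wd using z0 by (simp add: norm_divide)
        have d0: "0 < d" using False unfolding dd by simp
        have dle: "d \<le> \<bar>y - \<theta>\<bar>" unfolding dd using cis_sub_le[of y \<theta>] th by simp
        have dr: "d \<le> r" "d < b" using dle y by (auto simp: dist_real_def)
        have nw: "norm w = 1" "w \<noteq> 1" using z0 False z00 unfolding w_def by (auto simp: norm_divide)
        have hn: "norm (HH z0 n y) = norm (pp n w) * exp (1/2 - 1/d^2)"
          using False Phi_norm_T[OF nw] unfolding HH_def w_def[symmetric] d_def by (simp add: norm_mult)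
        have "norm (HH z0 n y) / norm (y - \<theta>) \<le> norm (HH z0 n y) / d"
          using dle d0 by (intro divide_left_mono) auto
        also have "\<dots> \<le> (C / d^m * exp (1/2 - 1/d^2)) / d"
          unfolding hn using b[of w] d0 dr unfolding d_def
          by (intro divide_right_mono mult_right_mono) auto
        also have "\<dots> = C * exp (1/2) * (exp(-1/d^2) / d^(m+1))"
        proof -
          have ee: "exp (1/2 - 1/d^2) = exp (1/2) * exp (-1/d^2)"
            by (simp add: exp_add[symmetric])
          show ?thesis unfolding ee using d0 by (simp add: field_simps)
        qed
        also have "\<dots> \<le> K * (exp(-1/d^2) / d^(m+1))"
          unfolding K_def using d0 by (intro mult_right_mono) auto
        also have "\<dots> < K * (e / K)"
          using bb[OF d0 dr(2)] K d0 by (intro mult_strict_left_mono) auto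
        also have "\<dots> = e" using K by simp
        finally show ?thesis by simp
      qed
    qed
  qed
  have "(HH z0 n has_derivative (\<lambda>x. x *\<^sub>R 0)) (at \<theta>)"
    unfolding has_derivative_iff_norm
    using lim th by (simp add: HH_def bounded_linear_zero)
  then show ?thesis by (simp add: has_vector_derivative_def)
qed

lemma HH_deriv:
  assumes z0: "norm z0 = 1"
  shows "(HH z0 n has_vector_derivative HH z0 (Suc n) \<theta>) (at \<theta>)"
proof (cases "cis \<theta> = z0")
  case True
  then show ?thesis using HH_deriv_on[OF z0 True] by (simp add: HH_def)
next
  case False
  then show ?thesis by (rule HH_deriv_off[OF z0])
qed

definition hh :: "complex \<Rightarrow> complex \<Rightarrow> complex" where
  "hh z0 z = (if z \<in> circleT \<and> z \<noteq> z0 then Phi (z / z0) else 0)"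

lemma param_hh: "param (hh z0) = HH z0 0"
  by (auto simp: param_def hh_def HH_def fun_eq_iff)

lemma vder_eq:
  assumes "f = G 0" "\<And>j t. enat j < k \<Longrightarrow> (G j has_vector_derivative G (Suc j) t) (at t)"
  shows "enat j \<le> k \<Longrightarrow> vder j f = G j"
proof (induction j)
  case 0
  then show ?case using assms(1) by simp
next
  case (Suc j)
  have jk: "enat j < k" using Suc.prems by (simp add: Suc_ile_eq)
  then have IH: "vder j f = G j" using Suc.IH by simp
  show ?case using assms(2)[OF jk] by (auto simp: IH fun_eq_iff intro: vector_derivative_at)
qed

lemma vder_hh:
  assumes "norm z0 = 1"
  shows "vder j (param (hh z0)) = HH z0 j"
  by (rule vder_eq[where k=\<infinity>]) (auto simp: param_hh HH_deriv[OF assms])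

lemma HH_cont:
  assumes "norm z0 = 1"
  shows "continuous_on UNIV (HH z0 j)"
  using HH_deriv[OF assms] has_vector_derivative_continuous continuous_at_imp_continuous_on by blast

lemma hh_Ck:
  assumes "norm z0 = 1"
  shows "hh z0 \<in> Ck k"
  unfolding Ck_def using vder_hh[OF assms] HH_cont[OF assms] HH_deriv[OF assms]
  by (auto simp: hh_def differentiable_def has_vector_derivative_def; blast)

lemma hh_nonext:
  assumes z0: "norm z0 = 1"
  shows "\<not> (\<exists>r>0. \<exists>F. F holomorphic_on ball z0 r \<and> (\<forall>z\<in>ball z0 r \<inter> circleT. F z = hh z0 z))"
proof
  assume "\<exists>r>0. \<exists>F. F holomorphic_on ball z0 r \<and> (\<forall>z\<in>ball z0 r \<inter> circleT. F z = hh z0 z)"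
  then obtain r F where r: "r > 0" and holF: "F holomorphic_on ball z0 r"
    and agree: "\<And>z. z \<in> ball z0 r \<inter> circleT \<Longrightarrow> F z = hh z0 z" by blast
  have z00: "z0 \<noteq> 0" using z0 by auto
  define S where "S = ball z0 r - {z0}"
  define Psi where "Psi z = Phi (z / z0)" for z
  have holP: "Psi holomorphic_on S"
  proof -
    have hP: "Phi holomorphic_on -{1}"
      unfolding holomorphic_on_def field_differentiable_def
      using Phi_deriv has_field_derivative_at_within by blast
    have d: "(\<lambda>z. z / z0) holomorphic_on S" by (auto intro!: holomorphic_intros)
    have im: "(\<lambda>z. z / z0) ` S \<subseteq> -{1}" using z00 unfolding S_def by auto
    have "(Phi \<circ> (\<lambda>z. z / z0)) holomorphic_on S" by (rule holomorphic_on_compose_gen[OF d hP im])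
    then show ?thesis unfolding Psi_def[abs_def] o_def .
  qed
  have opS: "open S" unfolding S_def by auto
  have conS: "connected S" unfolding S_def
    by (rule connected_punctured_convex) (use r in \<open>auto simp: aff_dim_open\<close>)
  define t1 where "t1 = min r 1 / 2"
  have t1: "0 < t1" "t1 < r" "t1 < pi" using r pi_gt3 unfolding t1_def by auto
  define \<xi> where "\<xi> = z0 * cis t1"
  have cis1: "cis t1 \<noteq> 1"
  proof
    assume "cis t1 = 1"
    then have "Im (cis t1) = 0" by simp
    then have "sin t1 = 0" by simp
    moreover have "sin t1 > 0" using t1 by (intro sin_gt_zero) auto
    ultimately show False by simp
  qed
  have xiS: "\<xi> \<in> S"
  proof -
    have "dist z0 \<xi> = norm (cis 0 - cis t1)"
      unfolding \<xi>_def dist_norm using z0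
      by (metis cis_zero mult.right_neutral norm_mult right_diff_distrib' mult.commute mult_1)
    also have "\<dots> \<le> \<bar>0 - t1\<bar>" by (rule cis_sub_le)
    finally have "dist z0 \<xi> < r" using t1 by simp
    moreover have "\<xi> \<noteq> z0" using cis1 z00 unfolding \<xi>_def by simp
    ultimately show ?thesis unfolding S_def by simp
  qed
  have xiT: "\<xi> \<in> circleT" unfolding \<xi>_def using z0 by (simp add: norm_mult)
  have limT: "\<xi> islimpt circleT"
  proof (rule connected_imp_perfect)
    show "connected circleT" by (rule connected_sphere) simp
    show "\<xi> \<in> circleT" by (rule xiT)
    fix x :: complex
    show "circleT \<noteq> {x}"
    proof
      assume e: "circleT = {x}"
      have "1 \<in> circleT" "-1 \<in> circleT" by auto
      then show False using e by auto
    qed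
  qed
  have limST: "\<xi> islimpt S \<inter> circleT"
    unfolding islimpt_def
  proof (intro allI impI)
    fix T assume T: "\<xi> \<in> T" "open T"
    then have "\<xi> \<in> T \<inter> S" "open (T \<inter> S)" using xiS opS by auto
    then obtain y where "y \<in> circleT" "y \<in> T \<inter> S" "y \<noteq> \<xi>"
      using limT unfolding islimpt_def by blast
    then show "\<exists>y\<in>S \<inter> circleT. y \<in> T \<and> y \<noteq> \<xi>" by blast
  qed
  have eqS: "F w - Psi w = 0" if "w \<in> S" for w
  proof (rule analytic_continuation[of "\<lambda>w. F w - Psi w" S "S \<inter> circleT" \<xi>])
    show "(\<lambda>w. F w - Psi w) holomorphic_on S"
      using holF holP unfolding S_def by (auto intro!: holomorphic_intros elim: holomorphic_on_subset)
    fix z assume "z \<in> S \<inter> circleT"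
    then show "F z - Psi z = 0" using agree[of z] unfolding S_def Psi_def hh_def by auto
  qed (use opS conS xiS limST that in auto)
  have "compact (F ` cball z0 (r/2))"
  proof (rule compact_continuous_image)
    show "continuous_on (cball z0 (r / 2)) F"
      by (rule continuous_on_subset[OF holomorphic_on_imp_continuous_on[OF holF]])
         (use r in \<open>auto simp: subset_iff\<close>)
  qed simp
  then obtain B where B: "\<And>z. z \<in> cball z0 (r/2) \<Longrightarrow> norm (F z) \<le> B"
    using compact_imp_bounded bounded_iff by (metis image_eqI)
  define t where "t = max (2/r) (sqrt (\<bar>B\<bar> + 1))"
  have t: "t > 0" "t \<ge> 2/r" "t \<ge> sqrt (\<bar>B\<bar> + 1)" unfolding t_def using r by (auto simp: less_max_iff_disj)
  define s where "s = 1 / t"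
  have s: "0 < s" "s \<le> r/2" using t r unfolding s_def by (auto simp: field_simps)
  have ts: "1 / s^2 = t^2" unfolding s_def by (simp add: power_one_over)
  have t2: "t^2 \<ge> \<bar>B\<bar> + 1"
  proof -
    have "sqrt (\<bar>B\<bar> + 1) ^ 2 \<le> t^2" using t(3) by (intro power_mono) auto
    then show ?thesis by simp
  qed
  define w where "w = z0 * (1 - of_real s)"
  have wS: "w \<in> S"
  proof -
    have "dist z0 w = s" unfolding w_def dist_norm using z0 s
      by (simp add: algebra_simps norm_mult)
    then show ?thesis unfolding S_def using s r z00 by (auto simp: w_def)
  qed
  have wc: "w \<in> cball z0 (r/2)"
  proof -
    have "dist z0 w = s" unfolding w_def dist_norm using z0 s
      by (simp add: algebra_simps norm_mult)
    then show ?thesis using s by simp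
  qed
  have "Psi w = exp (of_real (1 / s^2))"
    unfolding Psi_def Phi_def w_def using z00 by simp
  then have "norm (Psi w) = exp (t^2)" unfolding ts by simp
  moreover have "exp (t^2) > B"
    using exp_ge_add_one_self[of "t^2"] t2 by linarith
  moreover have "F w = Psi w" using eqS[OF wS] by simp
  ultimately show False using B[OF wc] by simp
qed

definition PCk :: "enat \<Rightarrow> (complex \<Rightarrow> complex) set \<Rightarrow> bool" where
  "PCk k = (\<lambda>U. U \<subseteq> Ck k \<and>
      (\<forall>u\<in>U. \<exists>n::nat. \<exists>\<epsilon>>0. enat n \<le> k \<and>
         {v \<in> Ck k. \<forall>j\<le>n. seminormCk j (\<lambda>z. v z - u z) < \<epsilon>} \<subseteq> U))"

lemma istop_PCk: "istopology (PCk k)"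
  unfolding istopology_def
proof (intro conjI allI impI)
  fix S T assume S: "PCk k S" and T: "PCk k T"
  show "PCk k (S \<inter> T)"
    unfolding PCk_def
  proof (intro conjI ballI)
    show "S \<inter> T \<subseteq> Ck k" using S unfolding PCk_def by auto
    fix u assume u: "u \<in> S \<inter> T"
    obtain n1 e1 where 1: "e1 > 0" "enat n1 \<le> k"
      "{v \<in> Ck k. \<forall>j\<le>n1. seminormCk j (\<lambda>z. v z - u z) < e1} \<subseteq> S"
      using S u unfolding PCk_def by blast
    obtain n2 e2 where 2: "e2 > 0" "enat n2 \<le> k"
      "{v \<in> Ck k. \<forall>j\<le>n2. seminormCk j (\<lambda>z. v z - u z) < e2} \<subseteq> T"
      using T u unfolding PCk_def by blast
    show "\<exists>n. \<exists>\<epsilon>>0. enat n \<le> k \<and> {v \<in> Ck k. \<forall>j\<le>n. seminormCk j (\<lambda>z. v z - u z) < \<epsilon>} \<subseteq> S \<inter> T"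
    proof (intro exI[of _ "max n1 n2"] exI[of _ "min e1 e2"] conjI)
      show "0 < min e1 e2" using 1 2 by simp
      show "enat (max n1 n2) \<le> k" using 1 2 by (cases "n1 \<le> n2") (auto simp: max_def)
      show "{v \<in> Ck k. \<forall>j\<le>max n1 n2. seminormCk j (\<lambda>z. v z - u z) < min e1 e2} \<subseteq> S \<inter> T"
        using 1(3) 2(3) by force
    qed
  qed
next
  fix K assume K: "\<forall>K\<in>K. PCk k K"
  show "PCk k (\<Union>K)"
    unfolding PCk_def
  proof (intro conjI ballI)
    show "\<Union>K \<subseteq> Ck k" using K unfolding PCk_def by auto
    fix u assume "u \<in> \<Union>K"
    then obtain S where "S \<in> K" "u \<in> S" by blast
    then obtain n e where "e > 0" "enat n \<le> k"
      "{v \<in> Ck k. \<forall>j\<le>n. seminormCk j (\<lambda>z. v z - u z) < e} \<subseteq> S"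
      using K unfolding PCk_def by blast
    then show "\<exists>n. \<exists>\<epsilon>>0. enat n \<le> k \<and> {v \<in> Ck k. \<forall>j\<le>n. seminormCk j (\<lambda>z. v z - u z) < \<epsilon>} \<subseteq> \<Union>K"
      using \<open>S \<in> K\<close> by blast
  qed
qed

lemma openin_Ck: "openin (Ck_topology k) U \<longleftrightarrow> PCk k U"
proof -
  have "Ck_topology k = topology (PCk k)" unfolding Ck_topology_def PCk_def by simp
  then show ?thesis using istop_PCk by simp
qed

lemma topspace_Ck: "topspace (Ck_topology k) = Ck k"
proof -
  have "PCk k (Ck k)" unfolding PCk_def
    by (auto intro!: exI[of _ 0] exI[of _ "1::real"] simp: zero_enat_def[symmetric])
  then show ?thesis unfolding topspace_def openin_Ck by (auto simp: PCk_def)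
qed

lemma bounded_cis:
  assumes "continuous_on UNIV (\<lambda>\<theta>. f (cis \<theta>))"
  shows "\<exists>B. \<forall>\<theta>. norm (f (cis \<theta>)) \<le> B"
proof -
  have "compact ((\<lambda>\<theta>. f (cis \<theta>)) ` {0..2*pi})"
    by (rule compact_continuous_image[OF continuous_on_subset[OF assms]]) auto
  then obtain B where B: "\<And>x. x \<in> (\<lambda>\<theta>. f (cis \<theta>)) ` {0..2*pi} \<Longrightarrow> norm x \<le> B"
    using compact_imp_bounded bounded_iff by metis
  have "norm (f (cis \<theta>)) \<le> B" for \<theta>
  proof -
    define n where "n = \<lfloor>\<theta> / (2*pi)\<rfloor>"
    define \<theta>' where "\<theta>' = \<theta> - 2 * pi * of_int n"
    have "of_int n \<le> \<theta> / (2*pi)" "\<theta> / (2*pi) < of_int n + 1" unfolding n_def by linarith+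
    then have "2*pi * of_int n \<le> \<theta>" "\<theta> < 2*pi * (of_int n + 1)"
      using pi_gt_zero by (simp_all add: field_simps)
    then have th': "\<theta>' \<in> {0..2*pi}" unfolding \<theta>'_def by (auto simp: algebra_simps)
    have c1: "cis (2 * pi * of_int n) = 1" by (rule cis_multiple_2pi) simp
    have "cis \<theta>' = cis \<theta> / cis (2 * pi * of_int n)" unfolding \<theta>'_def by (rule cis_divide[symmetric])
    also have "\<dots> = cis \<theta>" using c1 by simp
    finally have ce: "cis \<theta>' = cis \<theta>" .
    have "f (cis \<theta>') \<in> (\<lambda>\<theta>. f (cis \<theta>)) ` {0..2*pi}" using th' by blast
    then show ?thesis using B ce by metis
  qed
  then show ?thesis by blast
qed

lemma param_cont:
  assumes "u \<in> Ck k"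
  shows "continuous_on UNIV (param u)"
proof -
  have e0: "enat 0 \<le> k" by (simp add: enat_0)
  have "continuous_on UNIV (vder 0 (param u))" using assms e0 unfolding Ck_def by blast
  then show ?thesis by simp
qed

lemma sup_bound:
  assumes u: "u \<in> Ck k" and v: "v \<in> Ck k" and z: "z \<in> circleT"
  shows "norm (v z - u z) \<le> seminormCk 0 (\<lambda>z. v z - u z)"
proof -
  have c: "continuous_on UNIV (\<lambda>\<theta>. v (cis \<theta>) - u (cis \<theta>))"
    using param_cont[OF u] param_cont[OF v] unfolding param_def by (intro continuous_intros)
  obtain B where B: "\<And>\<theta>. norm (v (cis \<theta>) - u (cis \<theta>)) \<le> B"
    using bounded_cis[OF c] by blast
  have bdd: "bdd_above (range (\<lambda>\<theta>. norm (vder 0 (param (\<lambda>z. v z - u z)) \<theta>)))"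
    using B by (auto simp: param_def intro!: bdd_aboveI2)
  have z0: "z \<noteq> 0" using z by auto
  have zz: "cis (Arg z) = z" using z cis_Arg[OF z0] by (simp add: sgn_div_norm)
  have "norm (v z - u z) = norm (vder 0 (param (\<lambda>z. v z - u z)) (Arg z))"
    by (simp add: param_def zz)
  also have "\<dots> \<le> seminormCk 0 (\<lambda>z. v z - u z)"
    unfolding seminormCk_def by (rule cSUP_upper[OF _ bdd]) simp
  finally show ?thesis .
qed

definition Bm :: "complex \<Rightarrow> enat \<Rightarrow> nat \<Rightarrow> (complex \<Rightarrow> complex) set" where
  "Bm z0 k m = {u \<in> Ck k. \<exists>F. F holomorphic_on ball z0 (1 / real (Suc m)) \<and>
      (\<forall>z\<in>ball z0 (1 / real (Suc m)). norm (F z) \<le> real (Suc m)) \<and>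
      (\<forall>z\<in>ball z0 (1 / real (Suc m)) \<inter> circleT. F z = u z)}"

lemma open_Bm: "PCk k (Ck k - Bm z0 k m)"
  unfolding PCk_def
proof (intro conjI ballI)
  show "Ck k - Bm z0 k m \<subseteq> Ck k" by blast
  fix u assume u: "u \<in> Ck k - Bm z0 k m"
  define \<rho> where "\<rho> = 1 / real (Suc m)"
  define S where "S = ball z0 \<rho>"
  show "\<exists>n. \<exists>\<epsilon>>0. enat n \<le> k \<and> {v \<in> Ck k. \<forall>j\<le>n. seminormCk j (\<lambda>z. v z - u z) < \<epsilon>} \<subseteq> Ck k - Bm z0 k m"
  proof (rule ccontr)
    assume H: "\<not> ?thesis"
    have "\<exists>v. v \<in> Ck k \<and> v \<in> Bm z0 k m \<and> seminormCk 0 (\<lambda>z. v z - u z) < 1 / real (Suc j)" for j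
    proof -
      have e0: "enat 0 \<le> k" by (simp add: enat_0)
      have pos: "(0::real) < 1 / real (Suc j)" by simp
      have "\<not> {v \<in> Ck k. \<forall>i\<le>0. seminormCk i (\<lambda>z. v z - u z) < 1 / real (Suc j)} \<subseteq> Ck k - Bm z0 k m"
        using H e0 pos by blast
      then obtain v where "v \<in> Ck k" "\<forall>i\<le>0. seminormCk i (\<lambda>z. v z - u z) < 1 / real (Suc j)"
        "v \<notin> Ck k - Bm z0 k m" by blast
      then show ?thesis by blast
    qed
    then obtain V where V: "\<And>j. V j \<in> Ck k" "\<And>j. V j \<in> Bm z0 k m"
      "\<And>j. seminormCk 0 (\<lambda>z. V j z - u z) < 1 / real (Suc j)" by metis
    have "\<exists>F. F holomorphic_on S \<and> (\<forall>z\<in>S. norm (F z) \<le> real (Suc m)) \<and>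
       (\<forall>z\<in>S \<inter> circleT. F z = V j z)" for j
      using V(2)[of j] unfolding Bm_def S_def \<rho>_def by blast
    then obtain FF where FF: "\<And>j. FF j holomorphic_on S" "\<And>j z. z \<in> S \<Longrightarrow> norm (FF j z) \<le> real (Suc m)"
      "\<And>j z. z \<in> S \<inter> circleT \<Longrightarrow> FF j z = V j z" by metis
    define H where "H = {F. F holomorphic_on S \<and> (\<forall>z\<in>S. norm (F z) \<le> real (Suc m))}"
    obtain g r where g: "g holomorphic_on S" "strict_mono (r :: nat \<Rightarrow> nat)"
      "\<And>x. x \<in> S \<Longrightarrow> ((\<lambda>n. FF (r n) x) \<longlongrightarrow> g x) sequentially"
    proof (rule Montel[of S H FF])
      show "open S" unfolding S_def by simp
      show "\<And>h. h \<in> H \<Longrightarrow> h holomorphic_on S" unfolding H_def by blast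
      show "\<And>K. compact K \<Longrightarrow> K \<subseteq> S \<Longrightarrow> \<exists>B. \<forall>h\<in>H. \<forall>z\<in>K. norm (h z) \<le> B"
        unfolding H_def by blast
      show "range FF \<subseteq> H" unfolding H_def using FF by blast
    qed blast
    have gb: "norm (g z) \<le> real (Suc m)" if z: "z \<in> S" for z
    proof (rule LIMSEQ_le_const2)
      show "(\<lambda>n. norm (FF (r n) z)) \<longlonglongrightarrow> norm (g z)" by (rule tendsto_norm[OF g(3)[OF z]])
      show "\<exists>N. \<forall>n\<ge>N. norm (FF (r n) z) \<le> real (Suc m)" using FF(2)[OF z] by blast
    qed
    have ga: "g z = u z" if z: "z \<in> S \<inter> circleT" for z
    proof -
      have "(\<lambda>j. V j z - u z) \<longlonglongrightarrow> 0"
      proof (rule Lim_null_comparison)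
        show "\<forall>\<^sub>F j in sequentially. norm (V j z - u z) \<le> inverse (real (Suc j))"
        proof (intro always_eventually allI)
          fix j
          have uc: "u \<in> Ck k" using u by blast
          have zT: "z \<in> circleT" using z by blast
          have "norm (V j z - u z) \<le> seminormCk 0 (\<lambda>z. V j z - u z)" by (rule sup_bound[OF uc V(1) zT])
          also have "\<dots> \<le> 1 / real (Suc j)" using V(3)[of j] by simp
          finally show "norm (V j z - u z) \<le> inverse (real (Suc j))" by (simp add: divide_inverse)
        qed
        show "(\<lambda>j. inverse (real (Suc j))) \<longlonglongrightarrow> 0" by (rule LIMSEQ_inverse_real_of_nat)
      qed
      then have "(\<lambda>j. (V j z - u z) + u z) \<longlonglongrightarrow> 0 + u z" by (intro tendsto_intros)
      then have "(\<lambda>j. V j z) \<longlonglongrightarrow> u z" by simp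
      then have "(\<lambda>j. V (r j) z) \<longlonglongrightarrow> u z"
        using LIMSEQ_subseq_LIMSEQ[OF _ g(2)] by (simp add: o_def)
      moreover have "(\<lambda>j. V (r j) z) \<longlonglongrightarrow> g z"
        using g(3)[of z] FF(3)[OF z] z by simp
      ultimately show ?thesis using LIMSEQ_unique by metis
    qed
    have "u \<in> Bm z0 k m" unfolding Bm_def
      using u g(1) gb ga unfolding S_def \<rho>_def by auto
    then show False using u by blast
  qed
qed

lemma U5_eq: "U5 z0 k = (\<Inter>m. Ck k - Bm z0 k m)"
proof (intro equalityI subsetI)
  fix u assume u: "u \<in> U5 z0 k"
  then have uC: "u \<in> Ck k" and ne: "\<not> (\<exists>r>0. \<exists>F. F holomorphic_on ball z0 r \<and>
      (\<forall>z \<in> ball z0 r \<inter> circleT. F z = u z))" unfolding U5_def by auto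
  have "u \<notin> Bm z0 k m" for m
  proof
    assume "u \<in> Bm z0 k m"
    then obtain F where "F holomorphic_on ball z0 (1 / real (Suc m))"
      "\<forall>z\<in>ball z0 (1 / real (Suc m)) \<inter> circleT. F z = u z" unfolding Bm_def by blast
    moreover have "(0::real) < 1 / real (Suc m)" by simp
    ultimately show False using ne by blast
  qed
  then show "u \<in> (\<Inter>m. Ck k - Bm z0 k m)" using uC by auto
next
  fix u assume u: "u \<in> (\<Inter>m. Ck k - Bm z0 k m)"
  then have uC: "u \<in> Ck k" and nB: "\<And>m. u \<notin> Bm z0 k m" by auto
  show "u \<in> U5 z0 k" unfolding U5_def
  proof (intro CollectI conjI notI uC)
    assume "\<exists>r>0. \<exists>F. F holomorphic_on ball z0 r \<and> (\<forall>z \<in> ball z0 r \<inter> circleT. F z = u z)"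
    then obtain r F where r: "r > 0" and holF: "F holomorphic_on ball z0 r"
      and agree: "\<And>z. z \<in> ball z0 r \<inter> circleT \<Longrightarrow> F z = u z" by blast
    have "compact (F ` cball z0 (r/2))"
    proof (rule compact_continuous_image)
      show "continuous_on (cball z0 (r / 2)) F"
        by (rule continuous_on_subset[OF holomorphic_on_imp_continuous_on[OF holF]])
           (use r in \<open>auto simp: subset_iff\<close>)
    qed simp
    then obtain M where M: "\<And>z. z \<in> cball z0 (r/2) \<Longrightarrow> norm (F z) \<le> M"
      using compact_imp_bounded bounded_iff by (metis image_eqI)
    obtain m :: nat where m: "max M (2/r) \<le> real m" by (meson real_arch_simple)
    define \<rho> where "\<rho> = 1 / real (Suc m)"
    have "2 / r < real (Suc m)" using m by simp
    then have \<rho>: "\<rho> < r / 2" unfolding \<rho>_def using r by (simp add: field_simps)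
    have sub: "ball z0 \<rho> \<subseteq> ball z0 r" using \<rho> r by (auto simp: subset_iff)
    have "u \<in> Bm z0 k m" unfolding Bm_def
    proof (intro CollectI conjI uC exI[of _ F] ballI)
      show "F holomorphic_on ball z0 (1 / real (Suc m))"
        using holomorphic_on_subset[OF holF sub] unfolding \<rho>_def .
      fix z assume z: "z \<in> ball z0 (1 / real (Suc m))"
      then have "z \<in> cball z0 (r/2)" using \<rho> unfolding \<rho>_def by auto
      then show "norm (F z) \<le> real (Suc m)" using M m by force
    next
      fix z assume "z \<in> ball z0 (1 / real (Suc m)) \<inter> circleT"
      then show "F z = u z" using agree sub unfolding \<rho>_def by blast
    qed
    then show False using nB by blast
  qed
qed

lemma gdelta_U5: "gdelta_in (Ck_topology k) (U5 z0 k)"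
  unfolding U5_eq
proof (rule gdelta_in_Inter)
  show "countable (range (\<lambda>m. Ck k - Bm z0 k m))" by simp
  show "range (\<lambda>m. Ck k - Bm z0 k m) \<noteq> {}" by simp
  fix S assume "S \<in> range (\<lambda>m. Ck k - Bm z0 k m)"
  then show "gdelta_in (Ck_topology k) S"
    using open_Bm by (auto intro!: open_imp_gdelta_in simp: openin_Ck)
qed

lemma hvd_diff: "(f has_vector_derivative f') (at t) \<Longrightarrow> f differentiable (at t)"
  by (metis vector_derivative_works vector_derivative_at)

lemma add_hh:
  assumes z0: "norm z0 = 1" and u: "u \<in> Ck k"
  shows "(\<lambda>z. u z + c * hh z0 z) \<in> Ck k"
proof -
  define G where "G j = (\<lambda>t. vder j (param u) t + c * HH z0 j t)" for j
  have der: "(G j has_vector_derivative G (Suc j) t) (at t)" if j: "enat j < k" for j t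
  proof -
    have "vder j (param u) differentiable (at t)" using u j unfolding Ck_def by blast
    then have d1: "(vder j (param u) has_vector_derivative vder (Suc j) (param u) t) (at t)"
      by (simp add: vector_derivative_works)
    show ?thesis unfolding G_def
      by (intro has_vector_derivative_add d1 has_vector_derivative_mult_right HH_deriv[OF z0])
  qed
  have G0: "param (\<lambda>z. u z + c * hh z0 z) = G 0"
    unfolding G_def using param_hh[of z0] by (auto simp: param_def fun_eq_iff)
  have eq: "vder j (param (\<lambda>z. u z + c * hh z0 z)) = G j" if "enat j \<le> k" for j
    by (rule vder_eq[OF G0 der that])
  show ?thesis unfolding Ck_def
  proof (intro CollectI conjI allI impI)
    fix z assume "z \<notin> circleT"
    then show "u z + c * hh z0 z = 0" using u unfolding Ck_def hh_def by auto
  next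
    fix l assume l: "enat l \<le> k"
    have "continuous_on UNIV (vder l (param u))" using u l unfolding Ck_def by blast
    then show "continuous_on UNIV (vder l (param (\<lambda>z. u z + c * hh z0 z)))"
      unfolding eq[OF l] G_def using HH_cont[OF z0] by (intro continuous_intros) auto
  next
    fix l t assume l: "enat l < k"
    show "vder l (param (\<lambda>z. u z + c * hh z0 z)) differentiable (at t)"
      unfolding eq[OF less_imp_le[OF l]] by (rule hvd_diff[OF der[OF l]])
  qed
qed

lemma diff_hh:
  assumes z0: "norm z0 = 1"
  shows "vder j (param (\<lambda>z. (u z + c * hh z0 z) - u z)) = (\<lambda>t. c * HH z0 j t)"
proof (rule vder_eq[where k=\<infinity> and G = "\<lambda>j t. c * HH z0 j t"])
  show "param (\<lambda>z. u z + c * hh z0 z - u z) = (\<lambda>t. c * HH z0 0 t)"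
    using param_hh[of z0] by (auto simp: param_def fun_eq_iff)
  fix j t
  show "((\<lambda>t. c * HH z0 j t) has_vector_derivative c * HH z0 (Suc j) t) (at t)"
    by (intro has_vector_derivative_mult_right HH_deriv[OF z0])
qed simp

lemma HH_bound1:
  assumes z0: "norm z0 = 1"
  shows "\<exists>M. \<forall>t. norm (HH z0 j t) \<le> M"
proof -
  define K where "K w = (if w = z0 then 0 else pp j (w / z0) * Phi (w / z0))" for w
  have e: "HH z0 j = (\<lambda>t. K (cis t))" unfolding K_def HH_def by auto
  show ?thesis using bounded_cis[of K] HH_cont[OF z0, of j] unfolding e by blast
qed

lemma HH_bound:
  assumes z0: "norm z0 = 1"
  shows "\<exists>M\<ge>0. \<forall>j\<le>n. \<forall>t. norm (HH z0 j t) \<le> M"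
proof (induction n)
  case 0
  obtain M where "\<forall>t. norm (HH z0 0 t) \<le> M" using HH_bound1[OF z0] by blast
  then show ?case by (intro exI[of _ "max M 0"]) (auto intro: le_max_iff_disj[THEN iffD2])
next
  case (Suc n)
  obtain M where M: "M \<ge> 0" "\<forall>j\<le>n. \<forall>t. norm (HH z0 j t) \<le> M" using Suc by blast
  obtain M' where M': "\<forall>t. norm (HH z0 (Suc n) t) \<le> M'" using HH_bound1[OF z0] by blast
  show ?case
  proof (intro exI[of _ "max M M'"] conjI allI impI)
    show "0 \<le> max M M'" using M by simp
    fix j t assume "j \<le> Suc n"
    then show "norm (HH z0 j t) \<le> max M M'"
      using M M' by (cases "j = Suc n") (auto intro: le_max_iff_disj[THEN iffD2])
  qed
qed

lemma semi_hh:
  assumes z0: "norm z0 = 1" and M: "\<forall>t. norm (HH z0 j t) \<le> M"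
  shows "seminormCk j (\<lambda>z. (u z + c * hh z0 z) - u z) \<le> norm c * M"
  unfolding seminormCk_def diff_hh[OF z0]
proof (rule cSUP_least)
  fix t show "norm (c * HH z0 j t) \<le> norm c * M"
    using M by (simp add: norm_mult mult_left_mono)
qed simp

lemma dense_U5:
  assumes z0: "norm z0 = 1"
  shows "(Ck_topology k) closure_of (U5 z0 k) = topspace (Ck_topology k)"
proof (rule equalityI[OF closure_of_subset_topspace], rule subsetI)
  fix u assume "u \<in> topspace (Ck_topology k)"
  then have u: "u \<in> Ck k" by (simp add: topspace_Ck)
  show "u \<in> (Ck_topology k) closure_of (U5 z0 k)"
    unfolding in_closure_of
  proof (intro conjI allI impI)
    show "u \<in> topspace (Ck_topology k)" using u by (simp add: topspace_Ck)
    fix W assume W: "u \<in> W \<and> openin (Ck_topology k) W"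
    then obtain n \<epsilon> where e: "\<epsilon> > 0" "enat n \<le> k"
      and NW: "{v \<in> Ck k. \<forall>j\<le>n. seminormCk j (\<lambda>z. v z - u z) < \<epsilon>} \<subseteq> W"
      unfolding openin_Ck PCk_def by blast
    obtain M where M: "M \<ge> 0" "\<And>j t. j \<le> n \<Longrightarrow> norm (HH z0 j t) \<le> M"
      using HH_bound[OF z0, of n] by blast
    define \<delta> where "\<delta> = \<epsilon> / (2 * (M + 1))"
    have \<delta>: "\<delta> > 0" "\<delta> * M < \<epsilon>"
    proof -
      show "\<delta> > 0" unfolding \<delta>_def using e M by simp
      have "\<delta> * M = \<epsilon> * M / (2 * (M + 1))" unfolding \<delta>_def by simp
      also have "\<dots> < \<epsilon>"
      proof -
        have pc: "0 < 2 * (M + 1)" using M by simp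
        have "\<epsilon> * M < \<epsilon> * (2 * (M + 1))" using e M by (intro mult_strict_left_mono) auto
        then show ?thesis using pos_divide_less_eq[OF pc] by simp
      qed
      finally show "\<delta> * M < \<epsilon>" .
    qed
    have inW: "(\<lambda>z. u z + complex_of_real d * hh z0 z) \<in> W" if d: "0 < d" "d \<le> \<delta>" for d
    proof -
      have "(\<lambda>z. u z + complex_of_real d * hh z0 z) \<in> Ck k" by (rule add_hh[OF z0 u])
      moreover have "seminormCk j (\<lambda>z. (u z + complex_of_real d * hh z0 z) - u z) < \<epsilon>" if j: "j \<le> n" for j
      proof -
        have "seminormCk j (\<lambda>z. (u z + complex_of_real d * hh z0 z) - u z) \<le> norm (complex_of_real d) * M"
          by (rule semi_hh[OF z0]) (use M j in auto)
        also have "\<dots> = d * M" using d by simp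
        also have "\<dots> \<le> \<delta> * M" using d M by (intro mult_right_mono) auto
        also have "\<dots> < \<epsilon>" by (rule \<delta>(2))
        finally show ?thesis .
      qed
      ultimately show ?thesis using NW by blast
    qed
    define v1 where "v1 = (\<lambda>z. u z + complex_of_real \<delta> * hh z0 z)"
    define v2 where "v2 = (\<lambda>z. u z + complex_of_real (\<delta>/2) * hh z0 z)"
    have v1W: "v1 \<in> W" unfolding v1_def by (rule inW) (use \<delta> in auto)
    have v2W: "v2 \<in> W" unfolding v2_def by (rule inW) (use \<delta> in auto)
    have v1C: "v1 \<in> Ck k" unfolding v1_def by (rule add_hh[OF z0 u])
    have v2C: "v2 \<in> Ck k" unfolding v2_def by (rule add_hh[OF z0 u])
    have "v1 \<in> U5 z0 k \<or> v2 \<in> U5 z0 k"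
    proof (rule ccontr)
      assume "\<not> ?thesis"
      then have "v1 \<notin> U5 z0 k" "v2 \<notin> U5 z0 k" by auto
      then obtain r1 F1 r2 F2 where r1: "r1 > 0" "F1 holomorphic_on ball z0 r1"
        "\<And>z. z \<in> ball z0 r1 \<inter> circleT \<Longrightarrow> F1 z = v1 z"
        and r2: "r2 > 0" "F2 holomorphic_on ball z0 r2"
        "\<And>z. z \<in> ball z0 r2 \<inter> circleT \<Longrightarrow> F2 z = v2 z"
        using v1C v2C unfolding U5_def by blast
      define r where "r = min r1 r2"
      define c where "c = complex_of_real (\<delta>/2)"
      have c0: "c \<noteq> 0" unfolding c_def using \<delta> by simp
      define F where "F z = (F1 z - F2 z) / c" for z
      have "F holomorphic_on ball z0 r" unfolding F_def[abs_def] r_def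
        using r1(2) r2(2) c0
        by (auto intro!: holomorphic_intros elim: holomorphic_on_subset)
      moreover have "\<forall>z\<in>ball z0 r \<inter> circleT. F z = hh z0 z"
      proof
        fix z assume z: "z \<in> ball z0 r \<inter> circleT"
        then have "F1 z = v1 z" "F2 z = v2 z" using r1(3) r2(3) unfolding r_def by auto
        then have "F1 z - F2 z = c * hh z0 z"
          unfolding v1_def v2_def c_def by (simp add: algebra_simps of_real_mult[symmetric] del: of_real_mult)
        then show "F z = hh z0 z" unfolding F_def using c0 by simp
      qed
      moreover have "r > 0" unfolding r_def using r1 r2 by simp
      ultimately show False using hh_nonext[OF z0] by blast
    qed
    then show "\<exists>y. y \<in> U5 z0 k \<and> y \<in> W" using v1W v2W by blast
  qed
qed

theorem theorem3p17:
  fixes z0 :: complex and k :: enat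
  assumes "z0 \<in> circleT"
  shows "gdelta_in (Ck_topology k) (U5 z0 k) \<and>
         (Ck_topology k) closure_of (U5 z0 k) = topspace (Ck_topology k)"
proof -
  have z0: "norm z0 = 1" using assms by simp
  show ?thesis using gdelta_U5 dense_U5[OF z0] by blast
qed

end
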